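(* Let $n \ge 1$ be an integer, let $Z = (z_1,\dots,z_n)^T \in \mathbb{R}^n$, let $r > 0$ and let $\epsilon \in (0,1)$. For a parameter $\lambda > 0$ define the two-SAF-layer network $y_\lambda:\mathbb{R}^n \to (0,1]$ by $$r_k(X) = \lambda (x_k - z_k),\quad s_k(X) = e^{-r_k(X)^2}\ (k=1,\dots,n),\quad t(X) = \sum_{k=1}^n s_k(X) - n,\quad y_\lambda(X) = e^{-t(X)^2},$$ for $X = (x_1,\dots,x_n)^T$. Let $\Omega = \{X \in \mathbb{R}^n : \lVert X - Z\rVert \le r\}$ (Euclidean norm), and for $\tau \in (0,1)$ let $\Omega'_{\lambda,\tau} = \{X \in \mathbb{R}^n : y_\lambda(X) \ge \tau\}$. Then there exist $\lambda > 0$ and $\tau \in (0,1)$ such that $$\frac{V(\Omega \cap \Omega'_{\lambda,\tau})}{V(\Omega \cup \Omega'_{\lambda,\tau})} \ge 1 - \epsilon,$$ where $V$ denotes $n$-dimensional Lebesgue measure.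
   Context: This formalizes the statement that a network consisting of two layers of the one-dimensional radial basis function $\sigma(u) = e^{-u^2}$ (a "symmetric activation function"), with an affine layer before each, can decide membership of a sample $X$ in the closed Euclidean ball of radius $r$ centred at $Z$ with arbitrarily small error, the decision being "$X$ is in the ball iff $y_\lambda(X) \ge \tau$", and the error being measured by one minus the ratio of the volume of the intersection to the volume of the union of the true ball and the accepted region. *)

theory Defs
  imports "HOL-Analysis.Analysis"
begin

definition saf_net :: "real \<Rightarrow> real ^ 'n \<Rightarrow> real ^ 'n \<Rightarrow> real" where
  "saf_net lam Z X =
     (let t = (\<Sum>k\<in>UNIV. exp (- (lam * (X $ k - Z $ k))\<^sup>2)) - real CARD('n)
      in exp (- t\<^sup>2))"

end

theory Submission
  imports Defs
begin

lemma normsq: "(norm (u::real^'n))\<^sup>2 = (\<Sum>k\<in>UNIV. (u$k)\<^sup>2)"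
  by (simp add: norm_vec_def L2_set_def sum_nonneg)

lemma one_minus_exp_le: "0 \<le> x \<Longrightarrow> 1 - exp (-x) \<le> (x::real)"
  using exp_ge_add_one_self[of "-x"] by linarith

lemma one_minus_exp_ge: "0 \<le> x \<Longrightarrow> x / (1 + x) \<le> 1 - exp (-(x::real))"
proof -
  assume x: "0 \<le> x"
  have "exp (-x) = inverse (exp x)" by (simp add: exp_minus)
  also have "\<dots> \<le> inverse (1 + x)" using exp_ge_add_one_self[of x] x
    by (intro le_imp_inverse_le) auto
  finally show ?thesis using x by (simp add: field_simps)
qed

lemma inner_bound:
  fixes u :: "real^'n" and c :: real
  assumes "(norm u)\<^sup>2 \<le> c"
  shows "(\<Sum>k\<in>UNIV. 1 - exp (-(u$k)\<^sup>2)) \<le> c"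
proof -
  have "(\<Sum>k\<in>UNIV. 1 - exp (-(u$k)\<^sup>2)) \<le> (\<Sum>k\<in>UNIV. (u$k)\<^sup>2)"
    by (intro sum_mono one_minus_exp_le) simp
  thus ?thesis using assms normsq[of u] by simp
qed

lemma outer_bound:
  fixes u :: "real^'n" and c :: real
  assumes "(\<Sum>k\<in>UNIV. 1 - exp (-(u$k)\<^sup>2)) \<le> c" "c < 1"
  shows "(norm u)\<^sup>2 \<le> c / (1 - c)"
proof -
  define S where "S = (\<Sum>k\<in>UNIV. (u$k)\<^sup>2)"
  have S0: "S \<ge> 0" unfolding S_def by (intro sum_nonneg) simp
  have "(\<Sum>k\<in>UNIV. (u$k)\<^sup>2 / (1 + S)) \<le> (\<Sum>k\<in>UNIV. 1 - exp (-(u$k)\<^sup>2))"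
  proof (intro sum_mono)
    fix k
    have le: "(u$k)\<^sup>2 \<le> S" unfolding S_def
      by (rule member_le_sum) auto
    have "(u$k)\<^sup>2 / (1 + S) \<le> (u$k)\<^sup>2 / (1 + (u$k)\<^sup>2)"
      using le S0 by (intro divide_left_mono mult_pos_pos) (auto intro: add_pos_nonneg)
    also have "\<dots> \<le> 1 - exp (-(u$k)\<^sup>2)" by (rule one_minus_exp_ge) simp
    finally show "(u$k)\<^sup>2 / (1 + S) \<le> 1 - exp (-(u$k)\<^sup>2)" .
  qed
  also have "(\<Sum>k\<in>UNIV. (u$k)\<^sup>2 / (1 + S)) = S / (1 + S)"
    unfolding S_def by (simp add: sum_divide_distrib)
  finally have "S / (1 + S) \<le> c" using assms(1) by linarith
  hence "S \<le> c * (1 + S)" using S0 by (simp add: field_simps)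
  hence "S * (1 - c) \<le> c" by (simp add: algebra_simps)
  hence "S \<le> c / (1 - c)" using assms(2) by (simp add: field_simps)
  thus ?thesis using normsq[of u] S_def by simp
qed

lemma saf_iff:
  fixes Z X :: "real^'n"
  assumes "c \<ge> 0"
  shows "exp (-c\<^sup>2) \<le> saf_net lam Z X \<longleftrightarrow>
     (\<Sum>k\<in>UNIV. 1 - exp (-(lam * (X$k - Z$k))\<^sup>2)) \<le> c"
proof -
  define F where "F = (\<Sum>k\<in>UNIV. 1 - exp (-(lam * (X$k - Z$k))\<^sup>2))"
  have F0: "F \<ge> 0" unfolding F_def by (intro sum_nonneg) simp
  have t: "(\<Sum>k\<in>UNIV. exp (- (lam * (X $ k - Z $ k))\<^sup>2)) - real CARD('n) = - F"
    unfolding F_def by (simp add: sum_subtractf)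
  have "saf_net lam Z X = exp (-F\<^sup>2)" unfolding saf_net_def Let_def t by simp
  moreover have "exp (-c\<^sup>2) \<le> exp (-F\<^sup>2) \<longleftrightarrow> F\<^sup>2 \<le> c\<^sup>2" by simp
  moreover have "F\<^sup>2 \<le> c\<^sup>2 \<longleftrightarrow> F \<le> c" using F0 assms
    by (simp add: power2_le_iff_abs_le abs_of_nonneg)
  ultimately show ?thesis unfolding F_def by simp
qed



theorem lemma1:
  fixes Z :: "real ^ 'n" and r \<epsilon> :: real
  assumes "r > 0" and "0 < \<epsilon>" and "\<epsilon> < 1"
  shows "\<exists>lam \<tau>. lam > 0 \<and> 0 < \<tau> \<and> \<tau> < 1 \<and>
    (let \<Omega> = cball Z r; \<Omega>' = {X. saf_net lam Z X \<ge> \<tau>}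
     in measure lborel (\<Omega> \<inter> \<Omega>') / measure lborel (\<Omega> \<union> \<Omega>') \<ge> 1 - \<epsilon>)"
proof -
  define n where "n = CARD('n)"
  have n1: "real n \<ge> 1" unfolding n_def by simp
  define c where "c = \<epsilon> / real n"
  have c0: "0 < c" and c1: "c < 1" and cn: "real n * c = \<epsilon>"
    using assms n1 by (auto simp: c_def field_simps)
  define lam where "lam = sqrt (c / (1 - c)) / r"
  define \<tau> where "\<tau> = exp (-c\<^sup>2)"
  define \<rho> where "\<rho> = r * sqrt (1 - c)"
  have lam0: "lam > 0" unfolding lam_def using c0 c1 assms by auto
  have lam2: "lam\<^sup>2 * r\<^sup>2 = c / (1 - c)" unfolding lam_def using c0 c1 assms
    by (simp add: power_divide)
  have rho2: "\<rho>\<^sup>2 = r\<^sup>2 * (1 - c)" unfolding \<rho>_def using c1 by (simp add: power_mult_distrib)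
  have rho0: "\<rho> \<ge> 0" unfolding \<rho>_def using c1 assms by simp
  have tau: "0 < \<tau>" "\<tau> < 1" unfolding \<tau>_def using c0 by auto
  define F where "F X = (\<Sum>k\<in>UNIV. 1 - exp (-(lam * (X$k - Z$k))\<^sup>2))" for X :: "real^'n"
  define \<Omega>' where "\<Omega>' = {X. saf_net lam Z X \<ge> \<tau>}"
  have O'eq: "\<Omega>' = {X. F X \<le> c}"
    unfolding \<Omega>'_def \<tau>_def F_def using saf_iff[of c lam Z] c0 by auto
  have nu: "norm (lam *\<^sub>R (X - Z)) = lam * dist X Z" for X
    using lam0 by (simp add: dist_norm)
  have Fu: "F X = (\<Sum>k\<in>UNIV. 1 - exp (-((lam *\<^sub>R (X - Z))$k)\<^sup>2))" for X
    unfolding F_def by simp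
  have sub: "\<Omega>' \<subseteq> cball Z r"
  proof
    fix X assume "X \<in> \<Omega>'"
    hence "F X \<le> c" using O'eq by auto
    hence "(norm (lam *\<^sub>R (X - Z)))\<^sup>2 \<le> c / (1 - c)"
      using outer_bound[of "lam *\<^sub>R (X - Z)" c] c1 Fu by simp
    moreover have "(norm (lam *\<^sub>R (X - Z)))\<^sup>2 = lam\<^sup>2 * (dist X Z)\<^sup>2"
      by (simp only: nu power_mult_distrib)
    ultimately have "lam\<^sup>2 * (dist X Z)\<^sup>2 \<le> lam\<^sup>2 * r\<^sup>2" using lam2 by linarith
    hence "(dist X Z)\<^sup>2 \<le> r\<^sup>2" using lam0 by simp
    hence "dist X Z \<le> r" using assms by (simp add: power2_le_iff_abs_le)
    thus "X \<in> cball Z r" by (simp add: dist_commute)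
  qed
  have sup: "cball Z \<rho> \<subseteq> \<Omega>'"
  proof
    fix X assume "X \<in> cball Z \<rho>"
    hence d: "dist X Z \<le> \<rho>" by (simp add: dist_commute)
    have "(dist X Z)\<^sup>2 \<le> \<rho>\<^sup>2" using d by (intro power_mono) auto
    hence "lam\<^sup>2 * (dist X Z)\<^sup>2 \<le> lam\<^sup>2 * \<rho>\<^sup>2" by (intro mult_left_mono) auto
    also have "lam\<^sup>2 * \<rho>\<^sup>2 = (lam\<^sup>2 * r\<^sup>2) * (1 - c)" unfolding rho2 by (simp only: mult.assoc)
    also have "\<dots> = c" unfolding lam2 using c1 by simp
    finally have "(norm (lam *\<^sub>R (X - Z)))\<^sup>2 \<le> c" using nu by (simp add: power_mult_distrib)
    hence "F X \<le> c" using inner_bound Fu by metis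
    thus "X \<in> \<Omega>'" using O'eq by auto
  qed
  have closed: "closed \<Omega>'" unfolding O'eq F_def
    by (intro closed_Collect_le continuous_intros)
  have meas: "\<Omega>' \<in> fmeasurable lborel"
    using closed sub by (intro fmeasurableI2[OF fmeasurable_compact[of "cball Z r"]]) auto
  have m1: "measure lborel (cball Z \<rho>) \<le> measure lborel \<Omega>'"
    using sup meas by (intro measure_mono_fmeasurable) auto
  have int: "cball Z r \<inter> \<Omega>' = \<Omega>'" and un: "cball Z r \<union> \<Omega>' = cball Z r" using sub by auto
  define V where "V = unit_ball_vol (real n)"
  have V0: "V > 0" unfolding V_def by simp
  have mr: "measure lborel (cball Z r) = V * r ^ n" unfolding V_def n_def
    using content_cball[of r Z] assms by simp
  have mrho: "measure lborel (cball Z \<rho>) = V * \<rho> ^ n" unfolding V_def n_def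
    using content_cball[of \<rho> Z] rho0 by simp
  have "1 - \<epsilon> = 1 + real n * (-c)" using cn by simp
  also have "\<dots> \<le> (1 + (-c)) ^ n" using c1 by (intro Bernoulli_inequality) simp
  also have "\<dots> \<le> sqrt (1 - c) ^ n"
  proof (intro power_mono)
    have "(1 - c)\<^sup>2 \<le> 1 - c" using c0 c1 by (simp add: power2_eq_square mult_le_cancel_right1)
    hence "sqrt ((1 - c)\<^sup>2) \<le> sqrt (1 - c)" by (rule real_sqrt_le_mono)
    thus "1 + - c \<le> sqrt (1 - c)" using c1 by simp
  qed (use c1 in simp)
  also have "\<dots> = (V * \<rho> ^ n) / (V * r ^ n)"
    unfolding \<rho>_def using V0 assms by (simp add: power_mult_distrib)
  also have "\<dots> \<le> measure lborel \<Omega>' / measure lborel (cball Z r)"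
    unfolding mr[symmetric] mrho[symmetric] using m1 V0 assms
    by (intro divide_right_mono) (auto simp: mr)
  finally have "1 - \<epsilon> \<le> measure lborel (cball Z r \<inter> \<Omega>') / measure lborel (cball Z r \<union> \<Omega>')"
    unfolding int un .
  thus ?thesis using lam0 tau unfolding \<Omega>'_def Let_def by blast
qed

end
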